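(* Let $K$ be a field, $S=K[x_1,\ldots,x_n]$, and $\alpha=(k_1,\ldots,k_n)\in\mathbb N^n$. A monomial ideal $I\subset S$ is weakly polymatroidal if and only if its expansion $I^\alpha\subset S^\alpha$ is weakly polymatroidal.
   Context: $\mathbb N$ denotes the positive integers. For $\alpha=(k_1,\ldots,k_n)\in\mathbb N^n$ let $S^\alpha=K[x_{ij}:1\le i\le n,\ 1\le j\le k_i]$ and $P_i=(x_{i1},\ldots,x_{ik_i})\subset S^\alpha$. If $I$ is a monomial ideal with minimal monomial generating set $G(I)=\{\mathbf x^{\mathbf a_1},\ldots,\mathbf x^{\mathbf a_r}\}$, its expansion is $I^\alpha=\sum_{l=1}^r P_1^{\mathbf a_l(1)}\cdots P_n^{\mathbf a_l(n)}\subset S^\alpha$. A monomial ideal $I$ in a polynomial ring $K[x_1,\ldots,x_n]$ is weakly polymatroidal with respect to the ordering $x_1>\cdots>x_n$ if for every two monomials $u=x_1^{a_1}\cdots x_n^{a_n}$ and $v=x_1^{b_1}\cdots x_n^{b_n}$ in $G(I)$ with $a_1=b_1,\ldots,a_{t-1}=b_{t-1}$ and $a_t>b_t$, there exists $j>t$ such that $x_t(v/x_j)\in I$. $I$ is weakly polymatroidal if it is weakly polymatroidal with respect to some ordering of the variables. *)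

theory Defs
  imports Main
begin

text \<open>Monomials in the variables of a finite variable set V (variables of type 'v) are
exponent vectors 'v => nat vanishing outside V.  A monomial ideal of K[V] is identified with
the set of monomials it contains (it is spanned over K by them); this set is closed under
multiplication by monomials. Divisibility of monomials is the pointwise order.\<close>

definition mons :: "'v set \<Rightarrow> ('v \<Rightarrow> nat) set" where
  "mons V = {a. \<forall>x. x \<notin> V \<longrightarrow> a x = 0}"

definition monomial_ideal :: "'v set \<Rightarrow> ('v \<Rightarrow> nat) set \<Rightarrow> bool" where
  "monomial_ideal V I \<longleftrightarrow> I \<subseteq> mons V \<and> (\<forall>u\<in>I. \<forall>w\<in>mons V. u \<le> w \<longrightarrow> w \<in> I)"

definition mingens :: "('v \<Rightarrow> nat) set \<Rightarrow> ('v \<Rightarrow> nat) set" where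
  "mingens I = {u \<in> I. \<forall>w\<in>I. w \<le> u \<longrightarrow> w = u}"

definition gen :: "'v set \<Rightarrow> ('v \<Rightarrow> nat) set \<Rightarrow> ('v \<Rightarrow> nat) set" where
  "gen V G = {w \<in> mons V. \<exists>g\<in>G. g \<le> w}"

definition imult :: "'v set \<Rightarrow> ('v \<Rightarrow> nat) set \<Rightarrow> ('v \<Rightarrow> nat) set \<Rightarrow> ('v \<Rightarrow> nat) set" where
  "imult V A B = gen V {(\<lambda>x. a x + b x) | a b. a \<in> A \<and> b \<in> B}"

fun ipow :: "'v set \<Rightarrow> ('v \<Rightarrow> nat) set \<Rightarrow> nat \<Rightarrow> ('v \<Rightarrow> nat) set" where
  "ipow V A 0 = gen V {\<lambda>_. 0}"
| "ipow V A (Suc m) = imult V A (ipow V A m)"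

text \<open>Weakly polymatroidal with respect to the ordering ord!0 > ord!1 > ... of the variables.
The monomial x_t (v / x_j) is only formed when x_j divides v.\<close>
definition weakly_polymatroidal_wrt :: "('v \<Rightarrow> nat) set \<Rightarrow> 'v list \<Rightarrow> bool" where
  "weakly_polymatroidal_wrt I ord \<longleftrightarrow>
    (\<forall>u\<in>mingens I. \<forall>v\<in>mingens I. \<forall>t<length ord.
       ((\<forall>s<t. u (ord!s) = v (ord!s)) \<and> u (ord!t) > v (ord!t)) \<longrightarrow>
       (\<exists>j. t < j \<and> j < length ord \<and> v (ord!j) > 0 \<and>
            (let w = v(ord!j := v (ord!j) - 1) in w(ord!t := w (ord!t) + 1)) \<in> I))"

definition weakly_polymatroidal :: "'v set \<Rightarrow> ('v \<Rightarrow> nat) set \<Rightarrow> bool" where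
  "weakly_polymatroidal V I \<longleftrightarrow>
    (\<exists>ord. distinct ord \<and> set ord = V \<and> weakly_polymatroidal_wrt I ord)"

text \<open>Expansion. Variables of S are 0..<n; variables of S^alpha are pairs (i,j), i<n, j<k i
(0-indexed versions of x_{i,j}).\<close>
definition expvars :: "nat \<Rightarrow> (nat \<Rightarrow> nat) \<Rightarrow> (nat \<times> nat) set" where
  "expvars n k = {(i, j). i < n \<and> j < k i}"

definition Pideal :: "nat \<Rightarrow> (nat \<Rightarrow> nat) \<Rightarrow> nat \<Rightarrow> (nat \<times> nat \<Rightarrow> nat) set" where
  "Pideal n k i = gen (expvars n k) {(\<lambda>y. if y = (i, j) then 1 else 0) | j. j < k i}"

fun Pprod :: "nat \<Rightarrow> (nat \<Rightarrow> nat) \<Rightarrow> (nat \<Rightarrow> nat) \<Rightarrow> nat \<Rightarrow> (nat \<times> nat \<Rightarrow> nat) set" where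
  "Pprod n k a 0 = gen (expvars n k) {\<lambda>_. 0}"
| "Pprod n k a (Suc m) = imult (expvars n k) (Pprod n k a m) (ipow (expvars n k) (Pideal n k m) (a m))"

definition expansion :: "nat \<Rightarrow> (nat \<Rightarrow> nat) \<Rightarrow> (nat \<Rightarrow> nat) set \<Rightarrow> (nat \<times> nat \<Rightarrow> nat) set" where
  "expansion n k I = (\<Union>a\<in>mingens I. Pprod n k a n)"

end

theory Submission
  imports Defs
begin


definition sh :: "('v \<Rightarrow> nat) \<Rightarrow> 'v \<Rightarrow> 'v \<Rightarrow> ('v \<Rightarrow> nat)" where
  "sh v x z = (let w = v(z := v z - 1) in w(x := w x + 1))"

definition wpk :: "('v \<Rightarrow> nat) set \<Rightarrow> 'v set \<Rightarrow> ('v \<Rightarrow> nat) \<Rightarrow> bool" where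
  "wpk I V f \<longleftrightarrow> (\<forall>u\<in>mingens I. \<forall>v\<in>mingens I. \<forall>x\<in>V.
     ((\<forall>y\<in>V. f y < f x \<longrightarrow> u y = v y) \<and> v x < u x) \<longrightarrow>
     (\<exists>z\<in>V. f x < f z \<and> 0 < v z \<and> sh v x z \<in> I))"

fun idx :: "'a list \<Rightarrow> 'a \<Rightarrow> nat" where
  "idx [] x = 0"
| "idx (y # ys) x = (if y = x then 0 else Suc (idx ys x))"

lemma idx_lt: "x \<in> set xs \<Longrightarrow> idx xs x < length xs"
  by (induction xs) auto

lemma nth_idx: "x \<in> set xs \<Longrightarrow> xs ! idx xs x = x"
  by (induction xs) auto

lemma idx_nth: "distinct xs \<Longrightarrow> i < length xs \<Longrightarrow> idx xs (xs ! i) = i"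
proof (induction xs arbitrary: i)
  case (Cons a xs)
  then show ?case by (cases i) (auto simp: nth_mem)
qed simp

lemma wp_to_key:
  assumes "weakly_polymatroidal V I"
  shows "\<exists>f. inj_on f V \<and> wpk I V f"
proof -
  obtain ord where d: "distinct ord" and s: "set ord = V" and w: "weakly_polymatroidal_wrt I ord"
    using assms unfolding weakly_polymatroidal_def by blast
  have "inj_on (idx ord) V"
    by (metis inj_onI nth_idx s)
  moreover have "wpk I V (idx ord)"
    unfolding wpk_def
  proof (intro ballI impI)
    fix u v x assume u: "u \<in> mingens I" and v: "v \<in> mingens I" and x: "x \<in> V"
      and h: "(\<forall>y\<in>V. idx ord y < idx ord x \<longrightarrow> u y = v y) \<and> v x < u x"
    define t where "t = idx ord x"
    have t: "t < length ord" "ord ! t = x" using x s idx_lt nth_idx unfolding t_def by auto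
    have "\<forall>s<t. u (ord!s) = v (ord!s)"
    proof (intro allI impI)
      fix s assume "s < t"
      then have "s < length ord" using t by simp
      then have "ord!s \<in> V" "idx ord (ord!s) = s" using s idx_nth[OF d] by auto
      then show "u (ord!s) = v (ord!s)" using h \<open>s < t\<close> unfolding t_def by auto
    qed
    then have "(\<forall>s<t. u (ord!s) = v (ord!s)) \<and> u (ord!t) > v (ord!t)" using h t by simp
    then obtain j where j: "t < j" "j < length ord" "v (ord!j) > 0"
      "(let w = v(ord!j := v (ord!j) - 1) in w(ord!t := w (ord!t) + 1)) \<in> I"
      using w u v t(1) unfolding weakly_polymatroidal_wrt_def by blast
    show "\<exists>z\<in>V. idx ord x < idx ord z \<and> 0 < v z \<and> sh v x z \<in> I"
      apply (rule bexI[of _ "ord!j"])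
      using j t idx_nth[OF d] s unfolding sh_def t_def by auto
  qed
  ultimately show ?thesis by blast
qed




lemma key_to_wp:
  assumes fin: "finite V" and inj: "inj_on f V" and k: "wpk I V f"
  shows "weakly_polymatroidal V I"
proof -
  define L where "L = sorted_list_of_set (f ` V)"
  define ord where "ord = map (the_inv_into V f) L"
  have sL: "set L = f ` V" and stL: "sorted_wrt (<) L"
    using fin by (auto simp: L_def strict_sorted_list_of_set)
  have dL: "distinct L" using stL strict_sorted_iff by blast
  have len: "length ord = length L" by (simp add: ord_def)
  have fo: "f (ord!i) = L!i \<and> ord!i \<in> V" if "i < length ord" for i
  proof -
    have "L!i \<in> f ` V" using sL len that nth_mem by metis
    then obtain x where x: "x \<in> V" "L!i = f x" by blast
    have "ord!i = the_inv_into V f (L!i)" using that len by (simp add: ord_def)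
    also have "\<dots> = x" using x the_inv_into_f_f[OF inj] by simp
    finally show ?thesis using x by simp
  qed
  have so: "set ord = V"
  proof
    show "set ord \<subseteq> V" using fo by (auto simp: in_set_conv_nth)
    show "V \<subseteq> set ord"
    proof
      fix x assume "x \<in> V"
      then have "f x \<in> set L" using sL by auto
      then obtain i where i: "i < length L" "L!i = f x" by (auto simp: in_set_conv_nth)
      then have "f (ord!i) = f x" "ord!i \<in> V" using fo len by auto
      then have "ord!i = x" using inj \<open>x\<in>V\<close> by (simp add: inj_on_eq_iff)
      then show "x \<in> set ord" using i len by (metis nth_mem)
    qed
  qed
  have lt: "f (ord!i) < f (ord!j) \<longleftrightarrow> i < j" if ij: "i < length ord" "j < length ord" for i j
  proof -
    have 1: "i < j \<Longrightarrow> L!i < L!j" using stL ij len sorted_wrt_nth_less by metis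
    have 2: "j < i \<Longrightarrow> L!j < L!i" using stL ij len sorted_wrt_nth_less by metis
    have "f (ord!i) = L!i" "f (ord!j) = L!j" using fo ij by auto
    then show ?thesis using 1 2 by (cases i j rule: linorder_cases) auto
  qed
  have dord: "distinct ord"
  proof -
    have "inj_on (the_inv_into V f) (set L)" using sL inj by (simp add: inj_on_the_inv_into)
    then show ?thesis using dL by (simp add: ord_def distinct_map)
  qed
  have "weakly_polymatroidal_wrt I ord"
    unfolding weakly_polymatroidal_wrt_def
  proof (intro ballI allI impI)
    fix u v t assume u: "u \<in> mingens I" and v: "v \<in> mingens I" and t: "t < length ord"
      and h: "(\<forall>s<t. u (ord ! s) = v (ord ! s)) \<and> v (ord ! t) < u (ord ! t)"
    have "\<forall>y\<in>V. f y < f (ord!t) \<longrightarrow> u y = v y"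
    proof (intro ballI impI)
      fix y assume y: "y \<in> V" "f y < f (ord!t)"
      then obtain s where s: "s < length ord" "ord!s = y" using so by (auto simp: in_set_conv_nth)
      then have "s < t" using lt[OF s(1) t] y by simp
      then show "u y = v y" using h s by auto
    qed
    moreover have "ord!t \<in> V" using fo t by auto
    ultimately obtain z where z: "z \<in> V" "f (ord!t) < f z" "0 < v z" "sh v (ord!t) z \<in> I"
      using k u v h unfolding wpk_def by blast
    then obtain j where j: "j < length ord" "ord!j = z" using so by (auto simp: in_set_conv_nth)
    then have "t < j" using lt[OF t j(1)] z by simp
    then show "\<exists>j. t < j \<and> j < length ord \<and> v (ord!j) > 0 \<and>
            (let w = v(ord!j := v (ord!j) - 1) in w(ord!t := w (ord!t) + 1)) \<in> I"
      using j z unfolding sh_def by blast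
  qed
  then show ?thesis unfolding weakly_polymatroidal_def using dord so by blast
qed



definition deg :: "(nat \<Rightarrow> nat) \<Rightarrow> (nat \<times> nat \<Rightarrow> nat) \<Rightarrow> nat \<Rightarrow> nat" where
  "deg k w i = (\<Sum>j<k i. w (i, j))"

lemma gen_iff: "w \<in> gen V G \<longleftrightarrow> w \<in> mons V \<and> (\<exists>g\<in>G. g \<le> w)"
  by (simp add: gen_def)

lemma imult_iff: "w \<in> imult V A B \<longleftrightarrow> w \<in> mons V \<and> (\<exists>a\<in>A. \<exists>b\<in>B. (\<lambda>x. a x + b x) \<le> w)"
  unfolding imult_def gen_iff by blast

lemma deg_mono: "u \<le> w \<Longrightarrow> deg k u i \<le> deg k w i"
  unfolding deg_def by (intro sum_mono) (auto simp: le_fun_def)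

lemma deg_add: "deg k (\<lambda>x. a x + b x) i = deg k a i + deg k b i"
  unfolding deg_def by (simp add: sum.distrib)

lemma deg_unit: "deg k (\<lambda>y. if y = (p, q) then 1 else 0) i = (if i = p \<and> q < k p then 1 else 0)"
  unfolding deg_def by (auto simp: sum.delta)

lemma mons_expvars: "w \<in> mons (expvars n k) \<Longrightarrow> (i, j) \<notin> expvars n k \<Longrightarrow> w (i, j) = 0"
  by (simp add: mons_def)

lemma deg_out: "w \<in> mons (expvars n k) \<Longrightarrow> n \<le> i \<Longrightarrow> deg k w i = 0"
  unfolding deg_def by (auto simp: mons_def expvars_def)

lemma unit_mons: "i < n \<Longrightarrow> j < k i \<Longrightarrow> (\<lambda>y. if y = (i, j) then 1 else 0) \<in> mons (expvars n k)"
  by (auto simp: mons_def expvars_def)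

lemma sum_pos_ex: "0 < (\<Sum>j<K. g j) \<Longrightarrow> \<exists>j<K. 0 < (g j :: nat)"
proof (rule ccontr)
  assume a: "0 < (\<Sum>j<K. g j)" and "\<not> (\<exists>j<K. 0 < g j)"
  then have "\<forall>j\<in>{..<K}. g j = 0" by auto
  then show False using a by (simp add: sum.neutral)
qed

lemma ipow_char:
  assumes i: "i < n"
  shows "ipow (expvars n k) (Pideal n k i) e = {w \<in> mons (expvars n k). e \<le> deg k w i}"
proof (induction e)
  case 0
  show ?case by (auto simp: gen_iff le_fun_def)
next
  case (Suc e)
  let ?E = "expvars n k"
  show ?case
  proof (intro set_eqI iffI)
    fix w assume "w \<in> ipow ?E (Pideal n k i) (Suc e)"
    then obtain a b where w: "w \<in> mons ?E" and a: "a \<in> Pideal n k i" and b: "b \<in> ipow ?E (Pideal n k i) e"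
      and ab: "(\<lambda>x. a x + b x) \<le> w" by (auto simp: imult_iff)
    from a obtain j where j: "j < k i" "(\<lambda>y. if y = (i, j) then 1 else 0) \<le> a"
      unfolding Pideal_def gen_iff by blast
    have "1 \<le> deg k a i" using deg_mono[OF j(2), of k i] j(1) by (simp add: deg_unit)
    moreover have "e \<le> deg k b i" using b Suc by simp
    moreover have "deg k a i + deg k b i \<le> deg k w i" using deg_mono[OF ab, of k i] deg_add[of k a b i] by simp
    ultimately show "w \<in> {w \<in> mons ?E. Suc e \<le> deg k w i}" using w by simp
  next
    fix w assume "w \<in> {w \<in> mons ?E. Suc e \<le> deg k w i}"
    then have w: "w \<in> mons ?E" "Suc e \<le> deg k w i" by auto
    then obtain j where j: "j < k i" "0 < w (i, j)" using sum_pos_ex[of "\<lambda>j. w (i,j)" "k i"]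
      unfolding deg_def by auto
    define a where "a = (\<lambda>y. if y = (i, j) then 1 else 0::nat)"
    define b where "b = (\<lambda>y. w y - a y)"
    have ab: "(\<lambda>x. a x + b x) = w" using j by (auto simp: a_def b_def)
    have am: "a \<in> mons ?E" unfolding a_def using unit_mons i j by blast
    have aP: "a \<in> Pideal n k i" unfolding Pideal_def gen_iff using am j(1) a_def by auto
    have bm: "b \<in> mons ?E" using w(1) by (auto simp: mons_def b_def)
    have "deg k w i = deg k a i + deg k b i" using deg_add[of k a b i] ab by simp
    moreover have "deg k a i = 1" using j by (simp add: a_def deg_unit)
    ultimately have "e \<le> deg k b i" using w by simp
    then have "b \<in> ipow ?E (Pideal n k i) e" using Suc bm by simp
    then show "w \<in> ipow ?E (Pideal n k i) (Suc e)"
      using aP w(1) ab by (auto simp: imult_iff)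
  qed
qed

lemma Pprod_char:
  assumes "m \<le> n"
  shows "Pprod n k a m = {w \<in> mons (expvars n k). \<forall>i<m. a i \<le> deg k w i}"
  using assms
proof (induction m)
  case 0
  show ?case by (auto simp: gen_iff le_fun_def)
next
  case (Suc m)
  let ?E = "expvars n k"
  have mn: "m < n" using Suc by simp
  have IH: "Pprod n k a m = {w \<in> mons ?E. \<forall>i<m. a i \<le> deg k w i}" using Suc by simp
  show ?case
  proof (intro set_eqI iffI)
    fix w assume "w \<in> Pprod n k a (Suc m)"
    then obtain x y where w: "w \<in> mons ?E" and x: "x \<in> Pprod n k a m"
      and y: "y \<in> ipow ?E (Pideal n k m) (a m)"
      and xy: "(\<lambda>z. x z + y z) \<le> w" by (auto simp: imult_iff)
    have d: "deg k x i + deg k y i \<le> deg k w i" for i using deg_mono[OF xy, of k i] deg_add[of k x y i] by simp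
    have "a i \<le> deg k w i" if "i < Suc m" for i
    proof (cases "i = m")
      case True
      then show ?thesis using y ipow_char[OF mn] d[of m] by auto
    next
      case False
      then have "i < m" using that by simp
      then have "a i \<le> deg k x i" using x IH by auto
      then show ?thesis using d[of i] by linarith
    qed
    then show "w \<in> {w \<in> mons ?E. \<forall>i<Suc m. a i \<le> deg k w i}" using w by simp
  next
    fix w assume "w \<in> {w \<in> mons ?E. \<forall>i<Suc m. a i \<le> deg k w i}"
    then have w: "w \<in> mons ?E" "\<forall>i<Suc m. a i \<le> deg k w i" by auto
    define x where "x = (\<lambda>p. if fst p = m then 0 else w p)"
    define y where "y = (\<lambda>p. if fst p = m then w p else 0)"
    have xy: "(\<lambda>z. x z + y z) = w" by (auto simp: x_def y_def)
    have xm: "x \<in> mons ?E" "y \<in> mons ?E" using w(1) by (auto simp: mons_def x_def y_def)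
    have "deg k x i = deg k w i" if "i \<noteq> m" for i using that by (simp add: deg_def x_def)
    then have "x \<in> Pprod n k a m" using IH xm w(2) by auto
    moreover have "deg k y m = deg k w m" by (simp add: deg_def y_def)
    then have "y \<in> ipow ?E (Pideal n k m) (a m)" using ipow_char[OF mn] xm w(2) by auto
    ultimately show "w \<in> Pprod n k a (Suc m)" using w(1) xy by (auto simp: imult_iff)
  qed
qed



lemma min_below:
  assumes fin: "finite V" and IV: "I \<subseteq> mons V" and x: "x \<in> I"
  shows "\<exists>a\<in>mingens I. a \<le> x"
  using x
proof (induction "sum x V" arbitrary: x rule: less_induct)
  case less
  show ?case
  proof (cases "x \<in> mingens I")
    case True then show ?thesis by auto
  next
    case False
    then obtain w where w: "w \<in> I" "w \<le> x" "w \<noteq> x" using less.prems unfolding mingens_def by auto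
    then obtain y where y: "w y \<noteq> x y" by auto
    have "y \<in> V"
    proof (rule ccontr)
      assume "y \<notin> V"
      then have "w y = 0" "x y = 0" using w(1) less.prems IV by (auto simp: mons_def)
      then show False using y by simp
    qed
    moreover have "w y < x y" using w(2) y by (simp add: le_fun_def order_less_le)
    ultimately have "sum w V < sum x V" using fin w(2)
      by (intro sum_strict_mono_ex1) (auto simp: le_fun_def)
    then obtain a where "a \<in> mingens I" "a \<le> w" using less.hyps w(1) by blast
    then show ?thesis using w(2) by (meson order_trans)
  qed
qed

lemma deg_mons: "w \<in> mons (expvars n k) \<Longrightarrow> deg k w \<in> mons {..<n}"
  using deg_out by (auto simp: mons_def)

lemma EXP:
  assumes mi: "monomial_ideal {..<n} I"
  shows "expansion n k I = {w \<in> mons (expvars n k). deg k w \<in> I}"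
proof -
  have IV: "I \<subseteq> mons {..<n}" using mi by (simp add: monomial_ideal_def)
  have "expansion n k I = (\<Union>a\<in>mingens I. {w \<in> mons (expvars n k). \<forall>i<n. a i \<le> deg k w i})"
    unfolding expansion_def using Pprod_char[of n n k] by simp
  also have "\<dots> = {w \<in> mons (expvars n k). deg k w \<in> I}"
  proof (intro set_eqI iffI)
    fix w assume "w \<in> (\<Union>a\<in>mingens I. {w \<in> mons (expvars n k). \<forall>i<n. a i \<le> deg k w i})"
    then obtain a where a: "a \<in> mingens I" and w: "w \<in> mons (expvars n k)" "\<forall>i<n. a i \<le> deg k w i"
      by auto
    have aI: "a \<in> I" using a by (simp add: mingens_def)
    then have "a \<in> mons {..<n}" using IV by auto
    have "a x \<le> deg k w x" for x
      using w(2) \<open>a \<in> mons {..<n}\<close> by (cases "x < n") (auto simp: mons_def)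
    then have "a \<le> deg k w" by (simp add: le_fun_def)
    then have "deg k w \<in> I" using mi aI deg_mons[OF w(1)] by (auto simp: monomial_ideal_def)
    then show "w \<in> {w \<in> mons (expvars n k). deg k w \<in> I}" using w by simp
  next
    fix w assume "w \<in> {w \<in> mons (expvars n k). deg k w \<in> I}"
    then have w: "w \<in> mons (expvars n k)" "deg k w \<in> I" by auto
    obtain a where "a \<in> mingens I" "a \<le> deg k w" using min_below[OF _ IV w(2)] by auto
    then show "w \<in> (\<Union>a\<in>mingens I. {w \<in> mons (expvars n k). \<forall>i<n. a i \<le> deg k w i})"
      using w by (auto simp: le_fun_def)
  qed
  finally show ?thesis .
qed

lemma block_shrink:
  fixes f :: "nat \<Rightarrow> nat"
  shows "c \<le> (\<Sum>j<K. f j) \<Longrightarrow> \<exists>g. g \<le> f \<and> (\<Sum>j<K. g j) = c"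
proof (induction K arbitrary: c)
  case 0
  then show ?case by (intro exI[of _ "\<lambda>_. 0"]) (auto simp: le_fun_def)
next
  case (Suc K)
  show ?case
  proof (cases "c \<le> (\<Sum>j<K. f j)")
    case True
    then obtain g where g: "g \<le> f" "(\<Sum>j<K. g j) = c" using Suc.IH by blast
    have "(\<Sum>j<K. (g(K := 0)) j) = (\<Sum>j<K. g j)" by (intro sum.cong) auto
    then show ?thesis using g by (intro exI[of _ "g(K := 0)"]) (auto simp: le_fun_def)
  next
    case False
    define g where "g = f(K := c - (\<Sum>j<K. f j))"
    have "(\<Sum>j<K. g j) = (\<Sum>j<K. f j)" unfolding g_def by (intro sum.cong) auto
    moreover have "g \<le> f" using Suc.prems by (auto simp: g_def le_fun_def)
    moreover have "g K = c - (\<Sum>j<K. f j)" by (simp add: g_def)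
    ultimately have "(\<Sum>j<Suc K. g j) = c" using False by simp
    then show ?thesis using \<open>g \<le> f\<close> by blast
  qed
qed

lemma shrink:
  assumes w: "w \<in> mons (expvars n k)" and c: "c \<le> deg k w"
  shows "\<exists>w'\<in>mons (expvars n k). w' \<le> w \<and> deg k w' = c"
proof -
  have "\<forall>i. \<exists>g. g \<le> (\<lambda>j. w (i, j)) \<and> (\<Sum>j<k i. g j) = c i"
    using c block_shrink unfolding deg_def le_fun_def by blast
  then obtain G where G: "\<And>i. G i \<le> (\<lambda>j. w (i, j)) \<and> (\<Sum>j<k i. G i j) = c i" by metis
  define w' where "w' = (\<lambda>p. G (fst p) (snd p))"
  have le: "w' \<le> w" using G by (auto simp: w'_def le_fun_def)
  have "w' \<in> mons (expvars n k)"
  proof -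
    have "w' y = 0" if "y \<notin> expvars n k" for y
    proof -
      have "w' y \<le> w y" using le by (simp add: le_fun_def del: split_paired_All)
      moreover have "w y = 0" using w that by (simp add: mons_def del: split_paired_All)
      ultimately show ?thesis by simp
    qed
    then show ?thesis by (simp add: mons_def)
  qed
  moreover have "deg k w' = c" using G by (auto simp: deg_def w'_def)
  ultimately show ?thesis using le by blast
qed

lemma eq_of_deg:
  assumes "u \<le> w" "u \<in> mons (expvars n k)" "w \<in> mons (expvars n k)" "deg k u = deg k w"
  shows "u = w"
proof (rule ext)
  fix p :: "nat \<times> nat"
  obtain i j where p: "p = (i, j)" by fastforce
  show "u p = w p"
  proof (cases "j < k i")
    case True
    have "(\<Sum>j<k i. u (i, j)) = (\<Sum>j<k i. w (i, j))" using assms(4) unfolding deg_def by metis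
    moreover have "\<And>j. j \<in> {..<k i} \<Longrightarrow> u (i, j) \<le> w (i, j)" using assms(1) by (simp add: le_fun_def)
    ultimately have "u (i, j) = w (i, j)"
      using sum_mono_inv[of "\<lambda>j. u (i,j)" "{..<k i}" "\<lambda>j. w (i,j)" j] True by simp
    then show ?thesis using p by simp
  next
    case False
    then show ?thesis using assms(2,3) p by (auto simp: mons_def expvars_def)
  qed
qed

lemma MG:
  assumes mi: "monomial_ideal {..<n} I"
  shows "mingens (expansion n k I) = {w \<in> mons (expvars n k). deg k w \<in> mingens I}"
proof (intro set_eqI iffI)
  fix w assume "w \<in> mingens (expansion n k I)"
  then have w: "w \<in> mons (expvars n k)" "deg k w \<in> I"
    and min: "\<And>w'. w' \<in> expansion n k I \<Longrightarrow> w' \<le> w \<Longrightarrow> w' = w"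
    unfolding mingens_def EXP[OF mi] by auto
  have "c = deg k w" if cI: "c \<in> I" and cl: "c \<le> deg k w" for c
  proof -
    obtain w' where w': "w' \<in> mons (expvars n k)" "w' \<le> w" "deg k w' = c"
      using shrink[OF w(1) cl] by blast
    then have "w' \<in> expansion n k I" using cI EXP[OF mi] by simp
    then have "w' = w" using min w' by blast
    then show ?thesis using w' by simp
  qed
  then show "w \<in> {w \<in> mons (expvars n k). deg k w \<in> mingens I}"
    using w by (auto simp: mingens_def)
next
  fix w assume "w \<in> {w \<in> mons (expvars n k). deg k w \<in> mingens I}"
  then have w: "w \<in> mons (expvars n k)" "deg k w \<in> mingens I" by auto
  then have wI: "w \<in> expansion n k I" using EXP[OF mi] by (simp add: mingens_def)
  have "w' = w" if "w' \<in> expansion n k I" "w' \<le> w" for w'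
  proof -
    have w': "w' \<in> mons (expvars n k)" "deg k w' \<in> I" using that(1) EXP[OF mi] by auto
    have "deg k w' \<le> deg k w" using deg_mono[OF that(2)] by (simp add: le_fun_def)
    then have "deg k w' = deg k w" using w(2) w'(2) by (auto simp: mingens_def)
    then show ?thesis using eq_of_deg[OF that(2) w'(1) w(1)] by simp
  qed
  then show "w \<in> mingens (expansion n k I)" using wI by (auto simp: mingens_def)
qed



lemma sh_apply: "x \<noteq> z \<Longrightarrow> sh v x z y = (if y = x then v x + 1 else if y = z then v z - 1 else v y)"
  by (simp add: sh_def Let_def)

lemma sh_mons: "v \<in> mons V \<Longrightarrow> x \<in> V \<Longrightarrow> z \<in> V \<Longrightarrow> sh v x z \<in> mons V"
  by (auto simp: mons_def sh_def Let_def)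

lemma deg_sh:
  assumes xz: "(i, j) \<noteq> (l, j')" and x: "j < k i" and z: "j' < k l" and pos: "0 < v (l, j')"
  shows "deg k (sh v (i, j) (l, j')) = sh (deg k v) i l"
proof
  fix p
  let ?s = "sh v (i, j) (l, j')"
  define ux where "ux = (\<lambda>y. if y = (i, j) then 1 else 0::nat)"
  define uz where "uz = (\<lambda>y. if y = (l, j') then 1 else 0::nat)"
  have e: "(\<lambda>y. ?s y + uz y) = (\<lambda>y. v y + ux y)"
    using xz pos by (auto simp: sh_apply[OF xz] ux_def uz_def)
  have "deg k ?s p + deg k uz p = deg k v p + deg k ux p"
    using deg_add[of k ?s uz p] deg_add[of k v ux p] e by simp
  then have d: "deg k ?s p + (if p = l then 1 else 0) = deg k v p + (if p = i then 1 else 0)"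
    using x z by (simp add: ux_def uz_def deg_unit)
  have "v (l, j') \<le> deg k v l"
    unfolding deg_def using z by (intro member_le_sum) auto
  then have dl: "0 < deg k v l" using pos by simp
  show "deg k ?s p = sh (deg k v) i l p"
    using d dl by (cases "p = i"; cases "p = l"; cases "i = l") (auto simp: sh_def Let_def)
qed

lemma lex_lt:
  fixes a b j j' M :: nat
  assumes "j < M" "j' < M"
  shows "a * M + j < b * M + j' \<longleftrightarrow> a < b \<or> (a = b \<and> j < j')"
proof -
  have 1: "x * M + y < z * M + y'" if "x < z" "y < M" for x z y y' :: nat
  proof -
    have "Suc x * M \<le> z * M" using that(1) by (intro mult_le_mono1) simp
    then show ?thesis using that(2) by simp
  qed
  show ?thesis
  proof (cases a b rule: linorder_cases)
    case less then show ?thesis using 1 assms by blast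
  next
    case equal then show ?thesis by simp
  next
    case greater then show ?thesis using 1[of b a j' j] assms by simp
  qed
qed



lemma forward:
  assumes mi: "monomial_ideal {..<n} I" and inj: "inj_on f {..<n}" and wp: "wpk I {..<n} f"
  shows "\<exists>g. inj_on g (expvars n k) \<and> wpk (expansion n k I) (expvars n k) g"
proof -
  define E where "E = expvars n k"
  define J where "J = expansion n k I"
  define M where "M = (\<Sum>i<n. k i) + 1"
  define g where "g = (\<lambda>p. f (fst p) * M + snd p)"
  have jM: "j < M" if "(i, j) \<in> E" for i j
  proof -
    have "k i \<le> (\<Sum>i<n. k i)" using that by (intro member_le_sum) (auto simp: E_def expvars_def)
    then show ?thesis using that by (auto simp: E_def expvars_def M_def)
  qed
  have glt: "g (i, j) < g (i', j') \<longleftrightarrow> f i < f i' \<or> (f i = f i' \<and> j < j')"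
    if "(i, j) \<in> E" "(i', j') \<in> E" for i j i' j'
    using lex_lt[OF jM[OF that(1)] jM[OF that(2)]] by (simp add: g_def)
  have inE: "i < n" "j < k i" if "(i, j) \<in> E" for i j using that by (auto simp: E_def expvars_def)
  have injg: "inj_on g E"
  proof (rule inj_onI)
    fix x y assume xy: "x \<in> E" "y \<in> E" "g x = g y"
    obtain i j i' j' where p: "x = (i, j)" "y = (i', j')" by fastforce
    have "\<not> g x < g y" "\<not> g y < g x" using xy by auto
    then have "f i = f i'" "j = j'" using glt[of i j i' j'] glt[of i' j' i j] xy p
      by (auto simp: not_less_iff_gr_or_eq)
    moreover have "i = i'" using inj \<open>f i = f i'\<close> inE xy p by (simp add: inj_on_eq_iff)
    ultimately show "x = y" using p by simp
  qed
  have wpJ: "wpk J E g"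
    unfolding wpk_def
  proof (intro ballI impI)
    fix u v x assume u: "u \<in> mingens J" and v: "v \<in> mingens J" and xE: "x \<in> E"
      and H: "(\<forall>y\<in>E. g y < g x \<longrightarrow> u y = v y) \<and> v x < u x"
    obtain i j where x: "x = (i, j)" by fastforce
    have ij: "i < n" "j < k i" using inE xE x by auto
    have um: "u \<in> mons E" "deg k u \<in> mingens I" using u MG[OF mi] by (auto simp: J_def E_def)
    have vm: "v \<in> mons E" "deg k v \<in> mingens I" using v MG[OF mi] by (auto simp: J_def E_def)
    have vI: "deg k v \<in> I" using vm by (simp add: mingens_def)
    have eqb: "deg k u i' = deg k v i'" if "i' < n" "f i' < f i" for i'
      unfolding deg_def
    proof (rule sum.cong)
      fix j' assume "j' \<in> {..<k i'}"
      then have "(i', j') \<in> E" using that by (auto simp: E_def expvars_def)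
      moreover have "g (i', j') < g x" using glt[OF calculation xE[unfolded x]] that x by simp
      ultimately show "u (i', j') = v (i', j')" using H by blast
    qed simp
    have eqp: "u (i, j') = v (i, j')" if "j' < j" for j'
    proof -
      have "(i, j') \<in> E" using that ij by (auto simp: E_def expvars_def)
      moreover have "g (i, j') < g x" using glt[OF calculation xE[unfolded x]] that x by simp
      ultimately show ?thesis using H by blast
    qed
    have memJ: "sh v x z \<in> J" if "z \<in> E" "x \<noteq> z" "0 < v z" "deg k (sh v x z) \<in> I" for z
      using sh_mons[OF vm(1) xE that(1)] that(4) EXP[OF mi] by (simp add: J_def E_def)
    show "\<exists>z\<in>E. g x < g z \<and> 0 < v z \<and> sh v x z \<in> J"
    proof (cases "deg k v i < deg k u i")
      case True
      have "\<forall>y\<in>{..<n}. f y < f i \<longrightarrow> deg k u y = deg k v y" using eqb by auto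
      then obtain l where l: "l < n" "f i < f l" "0 < deg k v l" "sh (deg k v) i l \<in> I"
        using wp um vm True ij unfolding wpk_def by blast
      obtain j' where j': "j' < k l" "0 < v (l, j')"
        using sum_pos_ex[of "\<lambda>j. v (l,j)" "k l"] l(3) unfolding deg_def by auto
      have zE: "(l, j') \<in> E" using l j' by (auto simp: E_def expvars_def)
      have "g x < g (l, j')" using glt[OF xE[unfolded x] zE] l x by simp
      moreover have "x \<noteq> (l, j')" using l x by auto
      moreover have "deg k (sh v x (l, j')) = sh (deg k v) i l"
        using deg_sh[of i j l j' k v] x ij j' calculation(2) by simp
      ultimately show ?thesis using memJ[OF zE] j' l by (intro bexI[OF _ zE]) auto
    next
      case False
      have "\<exists>j'. j < j' \<and> j' < k i \<and> 0 < v (i, j')"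
      proof (rule ccontr)
        assume "\<not> ?thesis"
        then have z: "\<forall>j'\<in>{..<k i} - {..<Suc j}. v (i, j') = 0" by auto
        have "deg k v i = (\<Sum>j'<Suc j. v (i, j'))"
          unfolding deg_def using ij z by (intro sum.mono_neutral_right) auto
        also have "\<dots> = (\<Sum>j'<j. v (i, j')) + v (i, j)" by simp
        also have "\<dots> < (\<Sum>j'<j. u (i, j')) + u (i, j)" using eqp H x by simp
        also have "\<dots> = (\<Sum>j'<Suc j. u (i, j'))" by simp
        also have "\<dots> \<le> deg k u i" unfolding deg_def using ij by (intro sum_mono2) auto
        finally show False using False by simp
      qed
      then obtain j' where j': "j < j'" "j' < k i" "0 < v (i, j')" by blast
      have zE: "(i, j') \<in> E" using ij j' by (auto simp: E_def expvars_def)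
      have "g x < g (i, j')" using glt[OF xE[unfolded x] zE] j' x by simp
      moreover have xz: "x \<noteq> (i, j')" using j' x by auto
      moreover have "deg k (sh v x (i, j')) = sh (deg k v) i i"
        using deg_sh[of i j i j' k v] x ij j' xz by simp
      moreover have "sh (deg k v) i i = deg k v"
      proof -
        have "v (i, j') \<le> deg k v i" unfolding deg_def using j' by (intro member_le_sum) auto
        then show ?thesis using j' by (auto simp: sh_def Let_def)
      qed
      ultimately show ?thesis using memJ[OF zE] j' vI by (intro bexI[OF _ zE]) auto
    qed
  qed
  show ?thesis using injg wpJ by (auto simp: E_def J_def)
qed



lemma backward:
  assumes k1: "\<forall>i<n. k i \<ge> 1" and mi: "monomial_ideal {..<n} I"
    and inj: "inj_on g (expvars n k)" and wp: "wpk (expansion n k I) (expvars n k) g"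
  shows "\<exists>h. inj_on h {..<n} \<and> wpk I {..<n} h"
proof -
  define E where "E = expvars n k"
  define J where "J = expansion n k I"
  define h where "h = (\<lambda>i. g (i, 0::nat))"
  define e where "e = (\<lambda>a::nat \<Rightarrow> nat. \<lambda>p::nat \<times> nat. if snd p = 0 \<and> fst p < n then a (fst p) else 0)"
  have IV: "I \<subseteq> mons {..<n}" using mi by (simp add: monomial_ideal_def)
  have i0: "(i, 0) \<in> E" if "i < n" for i using that k1 by (auto simp: E_def expvars_def)
  have injh: "inj_on h {..<n}"
    using inj i0 by (auto simp: inj_on_def h_def E_def)
  have em: "e a \<in> mons E" for a using k1 by (auto simp: e_def mons_def E_def expvars_def)
  have de: "deg k (e a) = a" if "a \<in> mons {..<n}" for a
  proof
    fix p show "deg k (e a) p = a p"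
    proof (cases "p < n")
      case True
      then have "0 < k p" using k1 by auto
      then show ?thesis using True by (simp add: deg_def e_def)
    next
      case False
      then show ?thesis using that by (simp add: deg_def e_def mons_def)
    qed
  qed
  have eM: "e a \<in> mingens J" if "a \<in> mingens I" for a
  proof -
    have "a \<in> mons {..<n}" using that IV by (auto simp: mingens_def)
    then show ?thesis using that MG[OF mi] em de by (simp add: J_def E_def)
  qed
  have "wpk I {..<n} h"
    unfolding wpk_def
  proof (intro ballI impI)
    fix u v i assume u: "u \<in> mingens I" and v: "v \<in> mingens I" and i: "i \<in> {..<n}"
      and H: "(\<forall>y\<in>{..<n}. h y < h i \<longrightarrow> u y = v y) \<and> v i < u i"
    have H1: "\<forall>y\<in>E. g y < g (i, 0) \<longrightarrow> e u y = e v y"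
    proof (intro ballI impI)
      fix y assume "y \<in> E" "g y < g (i, 0)"
      then show "e u y = e v y" using H by (cases y) (auto simp: e_def h_def)
    qed
    have H2: "e v (i, 0) < e u (i, 0)" using H i by (simp add: e_def)
    obtain z where z: "z \<in> E" "g (i, 0) < g z" "0 < e v z" "sh (e v) (i, 0) z \<in> J"
      using wp eM[OF u] eM[OF v] i0 i H1 H2 unfolding wpk_def J_def E_def by blast
    obtain l q where lq: "z = (l, q)" by fastforce
    have lq2: "q = 0" "l < n" "0 < v l" using z(3) lq by (auto simp: e_def split: if_splits)
    have hl: "h i < h l" using z(2) lq lq2 by (simp add: h_def)
    have neq: "(i, 0) \<noteq> (l, 0::nat)" using hl by auto
    have "deg k (sh (e v) (i, 0) (l, 0)) = sh (deg k (e v)) i l"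
      using deg_sh[of i 0 l 0 k "e v"] neq k1 i lq2 z(3) lq by force
    also have "deg k (e v) = v" using v IV de by (auto simp: mingens_def)
    finally have "sh v i l \<in> I" using z(4) lq lq2 EXP[OF mi] by (simp add: J_def)
    then show "\<exists>z\<in>{..<n}. h i < h z \<and> 0 < v z \<and> sh v i z \<in> I"
      using hl lq2 by auto
  qed
  then show ?thesis using injh by blast
qed

lemma finite_expvars: "finite (expvars n k)"
proof -
  have "expvars n k = Sigma {..<n} (\<lambda>i. {..<k i})" by (auto simp: expvars_def)
  then show ?thesis by simp
qed

theorem theorem1p4:
  fixes n :: nat and k :: "nat \<Rightarrow> nat" and I :: "(nat \<Rightarrow> nat) set"
  assumes "\<forall>i<n. k i \<ge> 1"
    and "monomial_ideal {..<n} I"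
  shows "weakly_polymatroidal {..<n} I \<longleftrightarrow> weakly_polymatroidal (expvars n k) (expansion n k I)"
proof
  assume "weakly_polymatroidal {..<n} I"
  then obtain f where "inj_on f {..<n}" "wpk I {..<n} f" using wp_to_key by blast
  then obtain g where "inj_on g (expvars n k)" "wpk (expansion n k I) (expvars n k) g"
    using forward assms(2) by blast
  then show "weakly_polymatroidal (expvars n k) (expansion n k I)"
    using key_to_wp finite_expvars by blast
next
  assume "weakly_polymatroidal (expvars n k) (expansion n k I)"
  then obtain g where "inj_on g (expvars n k)" "wpk (expansion n k I) (expvars n k) g"
    using wp_to_key by blast
  then obtain h where "inj_on h {..<n}" "wpk I {..<n} h"
    using backward assms by blast
  then show "weakly_polymatroidal {..<n} I" using key_to_wp by blast
qed

end
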